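(* Suppose $f$ and $g$ are coprime in $\mathbb{Q}[t]$. Then there exists a positive integer $\Lambda$ such that $n\mid\Lambda$ whenever $n$ is a positive integer with $n^{12}\mid\gcd(A(a,b)^3,B(a,b)^2)$ for some $(a,b)\in\mathcal{T}_{\upsilon,\tau}$.
   Context: Fix $\upsilon\in\{1,2\}$ and positive integers $m,\tau$ with $m=1$ or $\upsilon\tau=1$. Let $f,g\in\mathbb{Z}[t]$ with $4f^3+27g^2\ne0$, no common real root, and $\max\{\frac12\deg f,\frac13\deg g\}=\frac{2m}{\upsilon\tau}$. Let $\varsigma=2m$ if $\upsilon=1$, $\varsigma=1$ if $\upsilon=2$; $A(x,y)=y^{2\varsigma}f(x/y^\tau)$, $B(x,y)=y^{3\varsigma}g(x/y^\tau)\in\mathbb{Z}[x,y]$. $\mathcal{T}_{\upsilon,\tau}=\{(a,b)\in\mathbb{Z}^2\setminus\{(0,0)\}:p^{\upsilon\tau}\nmid\gcd(a,b^\tau)\text{ for every prime }p\}$. *)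

theory Defs
  imports "HOL-Computational_Algebra.Computational_Algebra"
begin

definition vsig :: "nat \<Rightarrow> nat \<Rightarrow> nat" where
  "vsig \<upsilon> m = (if \<upsilon> = 1 then 2 * m else 1)"

(* weighted homogenisation  y^k f(x / y^\<tau>) = \<Sum>_i f_i x^i y^(k - \<tau> i),
   a genuine polynomial in x,y when \<tau> * deg f \<le> k (guaranteed by the degree hypothesis) *)
definition homog :: "int poly \<Rightarrow> nat \<Rightarrow> nat \<Rightarrow> int \<Rightarrow> int \<Rightarrow> int" where
  "homog f k \<tau> x y = (\<Sum>i\<le>degree f. coeff f i * x ^ i * y ^ (k - \<tau> * i))"

definition A_form :: "nat \<Rightarrow> nat \<Rightarrow> nat \<Rightarrow> int poly \<Rightarrow> int \<Rightarrow> int \<Rightarrow> int" where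
  "A_form \<upsilon> m \<tau> f x y = homog f (2 * vsig \<upsilon> m) \<tau> x y"

definition B_form :: "nat \<Rightarrow> nat \<Rightarrow> nat \<Rightarrow> int poly \<Rightarrow> int \<Rightarrow> int \<Rightarrow> int" where
  "B_form \<upsilon> m \<tau> g x y = homog g (3 * vsig \<upsilon> m) \<tau> x y"

definition T_set :: "nat \<Rightarrow> nat \<Rightarrow> (int \<times> int) set" where
  "T_set \<upsilon> \<tau> = {(a, b). (a, b) \<noteq> (0, 0) \<and>
       (\<forall>p::int. prime p \<longrightarrow> \<not> p ^ (\<upsilon> * \<tau>) dvd gcd a (b ^ \<tau>))}"

end

theory Submission
  imports Defs "HOL-Computational_Algebra.Field_as_Ring"
begin

lemma clear_denom:
  fixes q :: "rat poly"
  shows "\<exists>d Q. d > (0::int) \<and> smult (of_int d) q = map_poly of_int Q"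
proof (induction q)
  case 0
  show ?case by (rule exI[of _ 1], rule exI[of _ 0]) simp
next
  case (pCons c q)
  then obtain d0 Q0 where d0: "d0 > 0" "smult (of_int d0) q = map_poly of_int Q0" by blast
  obtain n e where ne: "quotient_of c = (n, e)" by (cases "quotient_of c")
  have e: "e > 0" using ne quotient_of_denom_pos by blast
  have c: "c = of_int n / of_int e" using ne quotient_of_div by blast
  have 1: "of_int (d0 * e) * c = (of_int (n * d0) :: rat)" using e c by simp
  have 2: "smult (of_int (d0 * e)) q = smult (of_int e) (map_poly of_int Q0)"
    using d0(2) by (metis of_int_mult smult_smult mult.commute)
  have 3: "smult (of_int e) (map_poly of_int Q0) = (map_poly of_int (smult e Q0) :: rat poly)"
    by (rule map_poly_smult[symmetric]) simp_all
  have "smult (of_int (d0 * e)) (pCons c q) = pCons (of_int (d0 * e) * c) (smult (of_int (d0 * e)) q)"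
    by simp
  also have "\<dots> = map_poly of_int (pCons (n * d0) (smult e Q0))"
    unfolding 1 2 3 by (subst map_poly_pCons) simp_all
  finally show ?case using d0 e by (intro exI[of _ "d0*e"] exI[of _ "pCons (n * d0) (smult e Q0)"]) simp
qed
lemma homog_eval:
  fixes h :: "int poly" and a b :: int
  assumes b: "b \<noteq> 0" and deg: "\<tau> * degree h \<le> k"
  shows "(of_int (homog h k \<tau> a b) :: rat) =
           of_int b ^ k * poly (map_poly of_int h) (of_int a / of_int b ^ \<tau>)"
proof -
  have "poly (map_poly (of_int::int\<Rightarrow>rat) h) (of_int a / of_int b ^ \<tau>) =
        (\<Sum>i\<le>degree h. of_int (coeff h i) * (of_int a / of_int b ^ \<tau>) ^ i)"
    by (simp add: poly_altdef degree_map_poly coeff_map_poly)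
  hence "of_int b ^ k * poly (map_poly (of_int::int\<Rightarrow>rat) h) (of_int a / of_int b ^ \<tau>) =
        (\<Sum>i\<le>degree h. of_int (coeff h i) * (of_int b ^ k * (of_int a / of_int b ^ \<tau>) ^ i))"
    by (simp add: sum_distrib_left algebra_simps)
  also have "\<dots> = (\<Sum>i\<le>degree h. of_int (coeff h i * a ^ i * b ^ (k - \<tau> * i)))"
  proof (rule sum.cong)
    fix i assume "i \<in> {..degree h}"
    hence "\<tau> * i \<le> k" using deg by (meson atMost_iff dual_order.trans mult_le_mono2)
    hence kk: "k = (k - \<tau> * i) + \<tau> * i" by simp
    have "(of_int b::rat) ^ k * (of_int a / of_int b ^ \<tau>) ^ i
          = of_int b ^ (k - \<tau> * i) * of_int b ^ (\<tau> * i) * (of_int a ^ i / of_int b ^ (\<tau> * i))"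
      by (subst kk, subst power_add) (simp add: power_divide power_mult)
    also have "\<dots> = of_int b ^ (k - \<tau> * i) * of_int a ^ i" using b by simp
    finally show "of_int (coeff h i) * ((of_int b::rat) ^ k * (of_int a / of_int b ^ \<tau>) ^ i)
       = of_int (coeff h i * a ^ i * b ^ (k - \<tau> * i))" by simp
  qed simp
  also have "\<dots> = of_int (homog h k \<tau> a b)" by (simp add: homog_def)
  finally show ?thesis by simp
qed

lemma homog_scale:
  fixes h :: "int poly" and a b q :: int
  assumes deg: "\<tau> * degree h \<le> k"
  shows "homog h k \<tau> (q ^ \<tau> * a) (q * b) = q ^ k * homog h k \<tau> a b"
  unfolding homog_def sum_distrib_left
proof (rule sum.cong)
  fix i assume "i \<in> {..degree h}"
  hence "\<tau> * i \<le> k" using deg by (meson atMost_iff dual_order.trans mult_le_mono2)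
  hence kk: "q ^ k = q ^ (\<tau> * i) * q ^ (k - \<tau> * i)" by (simp flip: power_add)
  show "coeff h i * (q ^ \<tau> * a) ^ i * (q * b) ^ (k - \<tau> * i) =
         q ^ k * (coeff h i * a ^ i * b ^ (k - \<tau> * i))"
    unfolding kk by (simp add: power_mult_distrib power_mult algebra_simps)
qed simp


lemma mult_bound:
  fixes p x :: int
  assumes "prime p" "x \<noteq> 0" "p ^ j dvd x"
  shows "int j < \<bar>x\<bar>"
proof -
  have a: "\<bar>p ^ j\<bar> \<le> \<bar>x\<bar>" using assms(2,3) dvd_imp_le_int by blast
  have p2: "p \<ge> 2" using assms(1) prime_ge_2_int by blast
  have b: "int j < 2 ^ j" by (rule of_nat_less_two_power)
  have c: "(2::int) ^ j \<le> p ^ j" using p2 by (intro power_mono) auto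
  have "\<bar>p ^ j\<bar> = p ^ j" using p2 by simp
  thus ?thesis using a b c by linarith
qed
lemma root_pow:
  fixes p x :: int
  assumes "prime p" "r > 0" "p ^ (j * r) dvd x ^ r"
  shows "p ^ j dvd x"
proof (cases "x = 0")
  case False
  have 1: "j * r \<le> multiplicity p (x ^ r)" using False assms(1,3) by (intro multiplicity_geI) (auto simp: not_prime_unit)
  have 2: "multiplicity p (x ^ r) = r * multiplicity p x"
    by (rule prime_elem_multiplicity_power_distrib) (use assms(1) False in auto)
  have "r * j \<le> r * multiplicity p x" using 1 2 by (simp only: mult.commute)
  hence "j \<le> multiplicity p x" using assms(2) by (metis mult_le_cancel1)
  thus ?thesis by (rule multiplicity_dvd')
next
  case True thus ?thesis using assms(2) by simp
qed
lemma bezout_hom: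
  fixes f g :: "int poly" and Kf Kg \<tau> :: nat
  assumes cop: "coprime (map_poly of_int f :: rat poly) (map_poly of_int g)"
    and df: "\<tau> * degree f \<le> Kf" and dg: "\<tau> * degree g \<le> Kg"
  shows "\<exists>R M. R \<noteq> (0::int) \<and> (\<forall>a b. b \<noteq> 0 \<longrightarrow>
           (\<exists>U V. U * homog f Kf \<tau> a b + V * homog g Kg \<tau> a b = R * b ^ M))"
proof -
  define F where "F = (map_poly of_int f :: rat poly)"
  define G where "G = (map_poly of_int g :: rat poly)"
  have "gcd F G = 1" using cop unfolding F_def G_def by simp
  then obtain u v where uv: "u * F + v * G = 1"
    using bezout_coefficients_fst_snd[of F G] by metis
  obtain d1 U0 where d1: "d1 > 0" "smult (of_int d1) u = map_poly of_int U0"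
    using clear_denom by blast
  obtain d2 V0 where d2: "d2 > 0" "smult (of_int d2) v = map_poly of_int V0"
    using clear_denom by blast
  define M where "M = Kf + Kg + \<tau> * (degree U0 + degree V0)"
  show ?thesis
  proof (rule exI[of _ "d1 * d2"], rule exI[of _ M], intro conjI allI impI)
    show "d1 * d2 \<noteq> 0" using d1 d2 by simp
    fix a b :: int assume b: "b \<noteq> 0"
    define t where "t = (of_int a / of_int b ^ \<tau> :: rat)"
    have dU: "\<tau> * degree U0 \<le> M - Kf" unfolding M_def by (simp add: algebra_simps)
    have dV: "\<tau> * degree V0 \<le> M - Kg" unfolding M_def by (simp add: algebra_simps)
    have eU: "(of_int (homog U0 (M - Kf) \<tau> a b) :: rat) = of_int b ^ (M - Kf) * (of_int d1 * poly u t)"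
      using homog_eval[OF b dU, of a] d1(2)[symmetric] unfolding t_def by simp
    have eV: "(of_int (homog V0 (M - Kg) \<tau> a b) :: rat) = of_int b ^ (M - Kg) * (of_int d2 * poly v t)"
      using homog_eval[OF b dV, of a] d2(2)[symmetric] unfolding t_def by simp
    have ef: "(of_int (homog f Kf \<tau> a b) :: rat) = of_int b ^ Kf * poly F t"
      using homog_eval[OF b df, of a] unfolding t_def F_def by simp
    have eg: "(of_int (homog g Kg \<tau> a b) :: rat) = of_int b ^ Kg * poly G t"
      using homog_eval[OF b dg, of a] unfolding t_def G_def by simp
    have pu: "poly u t * poly F t + poly v t * poly G t = 1"
      using arg_cong[OF uv, of "\<lambda>q. poly q t"] by simp
    have "M - Kf + Kf = M" unfolding M_def by simp
    hence bf: "(of_int b::rat) ^ (M - Kf) * of_int b ^ Kf = of_int b ^ M"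
      by (simp only: power_add[symmetric])
    have "M - Kg + Kg = M" unfolding M_def by simp
    hence bg: "(of_int b::rat) ^ (M - Kg) * of_int b ^ Kg = of_int b ^ M"
      by (simp only: power_add[symmetric])
    have "(of_int (d2 * homog U0 (M - Kf) \<tau> a b * homog f Kf \<tau> a b
             + d1 * homog V0 (M - Kg) \<tau> a b * homog g Kg \<tau> a b) :: rat)
          = of_int d2 * (of_int b ^ (M - Kf) * (of_int d1 * poly u t)) * (of_int b ^ Kf * poly F t)
            + of_int d1 * (of_int b ^ (M - Kg) * (of_int d2 * poly v t)) * (of_int b ^ Kg * poly G t)"
      by (simp add: eU eV ef eg)
    also have "\<dots> = of_int d1 * of_int d2 * ((of_int b ^ (M - Kf) * of_int b ^ Kf) * (poly u t * poly F t))
            + of_int d1 * of_int d2 * ((of_int b ^ (M - Kg) * of_int b ^ Kg) * (poly v t * poly G t))"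
      by (simp add: algebra_simps)
    also have "\<dots> = of_int d1 * of_int d2 * of_int b ^ M * (poly u t * poly F t + poly v t * poly G t)"
      unfolding bf bg by (simp add: algebra_simps)
    also have "\<dots> = of_int (d1 * d2 * b ^ M)" using pu by simp
    finally have "d2 * homog U0 (M - Kf) \<tau> a b * homog f Kf \<tau> a b
             + d1 * homog V0 (M - Kg) \<tau> a b * homog g Kg \<tau> a b = d1 * d2 * b ^ M"
      by (simp only: of_int_eq_iff)
    thus "\<exists>U V. U * homog f Kf \<tau> a b + V * homog g Kg \<tau> a b = d1 * d2 * b ^ M"
      by blast
  qed
qed

lemma top_term:
  fixes h :: "int poly" and p a b :: int and K \<tau> \<alpha> \<beta> \<gamma> :: nat
  assumes p: "prime p" and hK: "\<tau> * degree h = K"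
    and a1: "p ^ \<alpha> dvd a" and a2: "\<not> p ^ Suc \<alpha> dvd a"
    and c1: "p ^ \<gamma> dvd lead_coeff h" and c2: "\<not> p ^ Suc \<gamma> dvd lead_coeff h"
    and b1: "p ^ \<beta> dvd b"
    and ineq: "\<forall>i<degree h. degree h * \<alpha> + \<gamma> + 1 \<le> i * \<alpha> + (K - \<tau> * i) * \<beta>"
  shows "\<not> p ^ (degree h * \<alpha> + \<gamma> + 1) dvd homog h K \<tau> a b"
proof
  define N where "N = degree h * \<alpha> + \<gamma> + 1"
  assume H: "p ^ (degree h * \<alpha> + \<gamma> + 1) dvd homog h K \<tau> a b"
  have split: "homog h K \<tau> a b = (\<Sum>i<degree h. coeff h i * a ^ i * b ^ (K - \<tau> * i))
                  + lead_coeff h * a ^ degree h"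
    unfolding homog_def using hK by (simp add: lessThan_Suc_atMost[symmetric])
  have rest: "p ^ N dvd (\<Sum>i<degree h. coeff h i * a ^ i * b ^ (K - \<tau> * i))"
  proof (rule dvd_sum)
    fix i assume "i \<in> {..<degree h}"
    hence iN: "N \<le> i * \<alpha> + (K - \<tau> * i) * \<beta>" using ineq N_def by auto
    have "(p ^ \<alpha>) ^ i dvd a ^ i" using a1 by (rule dvd_power_same)
    hence 1: "p ^ (i * \<alpha>) dvd a ^ i" by (simp add: power_mult mult.commute)
    have "(p ^ \<beta>) ^ (K - \<tau> * i) dvd b ^ (K - \<tau> * i)" using b1 by (rule dvd_power_same)
    hence 2: "p ^ ((K - \<tau> * i) * \<beta>) dvd b ^ (K - \<tau> * i)" by (simp add: power_mult mult.commute)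
    have "p ^ (i * \<alpha>) * p ^ ((K - \<tau> * i) * \<beta>) dvd coeff h i * a ^ i * b ^ (K - \<tau> * i)"
      using mult_dvd_mono[OF 1 2] by (simp add: mult.assoc dvd_mult)
    hence "p ^ (i * \<alpha> + (K - \<tau> * i) * \<beta>) dvd coeff h i * a ^ i * b ^ (K - \<tau> * i)"
      by (simp add: power_add)
    thus "p ^ N dvd coeff h i * a ^ i * b ^ (K - \<tau> * i)"
      using le_imp_power_dvd[OF iN] dvd_trans by blast
  qed
  have top: "p ^ N dvd lead_coeff h * a ^ degree h"
    using H rest split N_def by (metis dvd_add_right_iff)
  have a0: "a \<noteq> 0" using a2 by auto
  have c0: "lead_coeff h \<noteq> 0" using c2 by auto
  have ma: "multiplicity p a = \<alpha>" using a1 a2 by (rule multiplicity_eqI)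
  have mc: "multiplicity p (lead_coeff h) = \<gamma>" using c1 c2 by (rule multiplicity_eqI)
  have pe: "prime_elem p" using p unfolding prime_def by blast
  have "multiplicity p (lead_coeff h * a ^ degree h) = \<gamma> + degree h * \<alpha>"
    using pe a0 c0 ma mc
    by (simp add: prime_elem_multiplicity_mult_distrib prime_elem_multiplicity_power_distrib)
  moreover have "N \<le> multiplicity p (lead_coeff h * a ^ degree h)"
    using top a0 c0 p by (intro multiplicity_geI) (auto simp: not_prime_unit)
  ultimately show False unfolding N_def by simp
qed

lemma core:
  fixes h :: "int poly" and p a b Aval Bval R :: int and K \<tau> M j :: nat
  assumes p: "prime p" and hK: "\<tau> * degree h = K" and hd: "degree h > 0"
    and R: "R \<noteq> 0"
    and ident: "b \<noteq> 0 \<longrightarrow> (\<exists>U V. U * Aval + V * Bval = R * b ^ M)"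
    and hH: "homog h K \<tau> a b = Aval \<or> homog h K \<tau> a b = Bval"
    and prim: "\<not> (p ^ \<tau> dvd a \<and> p dvd b)"
  shows core1: "p ^ j dvd Aval \<Longrightarrow> p ^ j dvd Bval \<Longrightarrow>
            j \<le> nat \<bar>R\<bar> + M * (K + nat \<bar>lead_coeff h\<bar>) + K + nat \<bar>lead_coeff h\<bar>"
    and core2: "\<not> p dvd R \<Longrightarrow> \<not> p dvd lead_coeff h \<Longrightarrow> p dvd Aval \<Longrightarrow> p dvd Bval \<Longrightarrow>
            \<tau> \<noteq> 1 \<and> \<not> p ^ K dvd homog h K \<tau> a b"
proof -
  define H where "H = homog h K \<tau> a b"
  define c where "c = lead_coeff h"
  define d where "d = degree h"
  have dvdH: "p ^ i dvd H" if "p ^ i dvd Aval" "p ^ i dvd Bval" for i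
    using hH that H_def by auto
  have nu: "\<not> is_unit p" using p not_prime_unit by blast
  have pe: "prime_elem p" using p unfolding prime_def by blast
  have c0: "c \<noteq> 0" using hd c_def by auto
  have "p ^ multiplicity p R dvd R" by (rule multiplicity_dvd)
  hence mR: "int (multiplicity p R) < \<bar>R\<bar>" using mult_bound[OF p R] by blast
  have "p ^ multiplicity p c dvd c" by (rule multiplicity_dvd)
  hence mc: "int (multiplicity p c) < \<bar>c\<bar>" using mult_bound[OF p c0] by blast
  show "p ^ j dvd Aval \<Longrightarrow> p ^ j dvd Bval \<Longrightarrow>
            j \<le> nat \<bar>R\<bar> + M * (K + nat \<bar>lead_coeff h\<bar>) + K + nat \<bar>lead_coeff h\<bar>"
  proof -
    assume jA: "p ^ j dvd Aval" and jB: "p ^ j dvd Bval"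
    show ?thesis
    proof (cases "p dvd b")
      case False
      hence b0: "b \<noteq> 0" by auto
      obtain U V where UV: "U * Aval + V * Bval = R * b ^ M" using ident[rule_format, OF b0] by blast
      have "p ^ j dvd U * Aval + V * Bval" using jA jB by simp
      hence "p ^ j dvd R * b ^ M" using UV by simp
      moreover have "coprime (p ^ j) (b ^ M)"
        using prime_imp_coprime[OF p False] by simp
      ultimately have "p ^ j dvd R" using coprime_dvd_mult_left_iff by blast
      hence "int j < \<bar>R\<bar>" using mult_bound[OF p R] by blast
      thus ?thesis by linarith
    next
      case True
      hence na: "\<not> p ^ \<tau> dvd a" using prim by blast
      hence a0: "a \<noteq> 0" by auto
      define \<alpha> where "\<alpha> = multiplicity p a"
      define \<gamma> where "\<gamma> = multiplicity p c"
      have a1: "p ^ \<alpha> dvd a" unfolding \<alpha>_def by (rule multiplicity_dvd)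
      have a2: "\<not> p ^ Suc \<alpha> dvd a"
        using multiplicity_geI[OF a0 nu, of "Suc \<alpha>"] \<alpha>_def by auto
      have c1: "p ^ \<gamma> dvd c" unfolding \<gamma>_def by (rule multiplicity_dvd)
      have c2: "\<not> p ^ Suc \<gamma> dvd c"
        using multiplicity_geI[OF c0 nu, of "Suc \<gamma>"] \<gamma>_def by auto
      have alt: "\<alpha> < \<tau>" using multiplicity_lessI[OF a0 nu na] \<alpha>_def by simp
      have "d * \<alpha> < d * \<tau>" using alt hd d_def by simp
      hence dK: "d * \<alpha> < K" using hK d_def by (metis mult.commute)
      define L where "L = d * \<alpha> + \<gamma> + 1"
      have LK: "L \<le> K + nat \<bar>c\<bar>" using dK mc unfolding L_def \<gamma>_def by linarith
      show ?thesis
      proof (cases "p ^ L dvd b")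
        case True
        have ineq: "\<forall>i<degree h. degree h * \<alpha> + \<gamma> + 1 \<le> i * \<alpha> + (K - \<tau> * i) * L"
        proof (intro allI impI)
          fix i assume i: "i < degree h"
          have "\<tau> * i < \<tau> * degree h" using i hK hd dK by (metis mult_less_cancel1 not_gr_zero mult_0 less_nat_zero_code)
          hence "1 \<le> K - \<tau> * i" using hK by simp
          hence "L \<le> (K - \<tau> * i) * L" by simp
          thus "degree h * \<alpha> + \<gamma> + 1 \<le> i * \<alpha> + (K - \<tau> * i) * L" unfolding L_def d_def by linarith
        qed
        have "\<not> p ^ L dvd H"
          using top_term[OF p hK a1 a2 c1[unfolded c_def] c2[unfolded c_def] True ineq]
          unfolding L_def H_def d_def by simp
        moreover have "p ^ j dvd H" using dvdH jA jB by blast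
        ultimately have "j < L" using le_imp_power_dvd dvd_trans by (metis not_le_imp_less)
        thus ?thesis using LK c_def by simp
      next
        case False
        hence b0: "b \<noteq> 0" by auto
        have mb: "multiplicity p b < L" using multiplicity_lessI[OF b0 nu False] .
        obtain U V where UV: "U * Aval + V * Bval = R * b ^ M" using ident[rule_format, OF b0] by blast
        have "p ^ j dvd U * Aval + V * Bval" using jA jB by simp
        hence "p ^ j dvd R * b ^ M" using UV by simp
        hence "j \<le> multiplicity p (R * b ^ M)"
          using R b0 nu by (intro multiplicity_geI) auto
        also have "\<dots> = multiplicity p R + M * multiplicity p b"
          using pe R b0 by (simp add: prime_elem_multiplicity_mult_distrib prime_elem_multiplicity_power_distrib)
        also have "\<dots> \<le> nat \<bar>R\<bar> + M * L" using mR mb by (intro add_mono mult_le_mono) auto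
        also have "\<dots> \<le> nat \<bar>R\<bar> + M * (K + nat \<bar>c\<bar>)" using LK by simp
        finally show ?thesis using c_def by simp
      qed
    qed
  qed
  show "\<not> p dvd R \<Longrightarrow> \<not> p dvd lead_coeff h \<Longrightarrow> p dvd Aval \<Longrightarrow> p dvd Bval \<Longrightarrow>
            \<tau> \<noteq> 1 \<and> \<not> p ^ K dvd homog h K \<tau> a b"
  proof -
    assume nR: "\<not> p dvd R" and nc: "\<not> p dvd lead_coeff h" and pA: "p dvd Aval" and pB: "p dvd Bval"
    have pH: "p dvd H" using dvdH[of 1] pA pB by simp
    show ?thesis
    proof (cases "p dvd b")
      case False
      hence b0: "b \<noteq> 0" by auto
      obtain U V where UV: "U * Aval + V * Bval = R * b ^ M" using ident[rule_format, OF b0] by blast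
      have "p dvd U * Aval + V * Bval" using pA pB by simp
      hence "p dvd R * b ^ M" using UV by simp
      hence "p dvd R \<or> p dvd b" using p by (auto simp: prime_dvd_mult_iff dest: prime_dvd_power)
      thus ?thesis using nR False by blast
    next
      case True
      hence na: "\<not> p ^ \<tau> dvd a" using prim by blast
      hence a0: "a \<noteq> 0" by auto
      define \<alpha> where "\<alpha> = multiplicity p a"
      have a1: "p ^ \<alpha> dvd a" unfolding \<alpha>_def by (rule multiplicity_dvd)
      have a2: "\<not> p ^ Suc \<alpha> dvd a"
        using multiplicity_geI[OF a0 nu, of "Suc \<alpha>"] \<alpha>_def by auto
      have c1: "p ^ 0 dvd lead_coeff h" by simp
      have c2: "\<not> p ^ Suc 0 dvd lead_coeff h" using nc by simp
      have alt: "\<alpha> < \<tau>" using multiplicity_lessI[OF a0 nu na] \<alpha>_def by simp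
      have b1: "p ^ 1 dvd b" using True by simp
      have ineq: "\<forall>i<degree h. degree h * \<alpha> + 0 + 1 \<le> i * \<alpha> + (K - \<tau> * i) * 1"
      proof (intro allI impI)
        fix i assume i: "i < degree h"
        define e where "e = degree h - i"
        have e1: "e \<ge> 1" using i e_def by simp
        have dh: "degree h = i + e" using i e_def by simp
        have "K - \<tau> * i = \<tau> * e" using hK dh by (simp add: algebra_simps)
        moreover have "(\<alpha> + 1) * e \<le> \<tau> * e" using alt by (intro mult_le_mono1) simp
        moreover have "\<alpha> * e + 1 \<le> (\<alpha> + 1) * e" using e1 by simp
        ultimately show "degree h * \<alpha> + 0 + 1 \<le> i * \<alpha> + (K - \<tau> * i) * 1"
          unfolding dh by (simp add: algebra_simps)
      qed
      have nt: "\<not> p ^ (degree h * \<alpha> + 0 + 1) dvd H"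
        using top_term[OF p hK a1 a2 c1 c2 b1 ineq] unfolding H_def .
      have t1: "\<tau> \<noteq> 1"
      proof
        assume "\<tau> = 1"
        hence "\<alpha> = 0" using alt by simp
        thus False using nt pH by simp
      qed
      have "degree h * \<alpha> < degree h * \<tau>" using alt hd by simp
      hence "degree h * \<alpha> + 0 + 1 \<le> K" using hK by (simp add: mult.commute)
      hence "\<not> p ^ K dvd H" using nt le_imp_power_dvd dvd_trans by blast
      thus ?thesis using t1 H_def by simp
    qed
  qed
qed

theorem lemma2p7:
  fixes \<upsilon> m \<tau> :: nat and f g :: "int poly"
  assumes hups: "\<upsilon> \<in> {1, 2}"
    and hm: "m > 0" and htau: "\<tau> > 0"
    and hmt: "m = 1 \<or> \<upsilon> * \<tau> = 1"
    and hdisc: "4 * f ^ 3 + 27 * g ^ 2 \<noteq> 0"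
    and hroot: "\<not> (\<exists>x::real. poly (map_poly of_int f) x = 0 \<and> poly (map_poly of_int g) x = 0)"
    and hdeg: "max (real (degree f) / 2) (real (degree g) / 3) = 2 * real m / real (\<upsilon> * \<tau>)"
    and hcop: "coprime (map_poly of_int f :: rat poly) (map_poly of_int g)"
  shows "\<exists>\<Lambda>::int. \<Lambda> > 0 \<and>
           (\<forall>n::int. n > 0 \<longrightarrow>
              (\<exists>(a, b) \<in> T_set \<upsilon> \<tau>.
                 n ^ 12 dvd gcd ((A_form \<upsilon> m \<tau> f a b) ^ 3) ((B_form \<upsilon> m \<tau> g a b) ^ 2))
              \<longrightarrow> n dvd \<Lambda>)"
proof -
  define \<sigma> where "\<sigma> = vsig \<upsilon> m"
  have sig: "(\<upsilon> = 1 \<and> \<sigma> = 2 * m) \<or> (\<upsilon> = 2 \<and> \<sigma> = 1 \<and> m = 1)"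
  proof (cases "\<upsilon> = 1")
    case True thus ?thesis by (simp add: \<sigma>_def vsig_def)
  next
    case False
    hence u2: "\<upsilon> = 2" using hups by simp
    hence "\<upsilon> * \<tau> \<noteq> 1" by simp
    thus ?thesis using hmt u2 by (simp add: \<sigma>_def vsig_def)
  qed
  have sp: "\<sigma> > 0" using sig hm by auto
  have "2 * real m / real (\<upsilon> * \<tau>) = real \<sigma> / real \<tau>"
    using sig htau by (auto simp: field_simps)
  hence hd: "max (real (degree f) / 2) (real (degree g) / 3) = real \<sigma> / real \<tau>" using hdeg by simp
  have tpos: "real \<tau> > 0" using htau by simp
  have "real (degree f) / 2 \<le> real \<sigma> / real \<tau>" using hd by (metis max.cobounded1)
  hence "real (degree f) * real \<tau> \<le> 2 * real \<sigma>" using tpos by (simp add: field_simps)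
  hence df: "\<tau> * degree f \<le> 2 * \<sigma>" by (simp flip: of_nat_mult add: mult.commute)
  have "real (degree g) / 3 \<le> real \<sigma> / real \<tau>" using hd by (metis max.cobounded2)
  hence "real (degree g) * real \<tau> \<le> 3 * real \<sigma>" using tpos by (simp add: field_simps)
  hence dg: "\<tau> * degree g \<le> 3 * \<sigma>" by (simp flip: of_nat_mult add: mult.commute)
  have eq: "\<tau> * degree f = 2 * \<sigma> \<or> \<tau> * degree g = 3 * \<sigma>"
  proof (cases "real (degree f) / 2 \<le> real (degree g) / 3")
    case True
    hence "real (degree g) / 3 = real \<sigma> / real \<tau>" using hd by (simp add: max_def)
    hence "real (degree g) * real \<tau> = 3 * real \<sigma>" using tpos by (simp add: field_simps)
    hence "\<tau> * degree g = 3 * \<sigma>" by (simp flip: of_nat_mult add: mult.commute)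
    thus ?thesis by simp
  next
    case False
    hence "real (degree f) / 2 = real \<sigma> / real \<tau>" using hd by (simp add: max_def)
    hence "real (degree f) * real \<tau> = 2 * real \<sigma>" using tpos by (simp add: field_simps)
    hence "\<tau> * degree f = 2 * \<sigma>" by (simp flip: of_nat_mult add: mult.commute)
    thus ?thesis by simp
  qed
  define Af where "Af = (\<lambda>a b. A_form \<upsilon> m \<tau> f a b)"
  define Bf where "Bf = (\<lambda>a b. B_form \<upsilon> m \<tau> g a b)"
  have Aeq: "Af a b = homog f (2 * \<sigma>) \<tau> a b" for a b unfolding Af_def A_form_def \<sigma>_def by simp
  have Beq: "Bf a b = homog g (3 * \<sigma>) \<tau> a b" for a b unfolding Bf_def B_form_def \<sigma>_def by simp
  obtain R M where R: "R \<noteq> 0" and identh: "\<forall>a b. b \<noteq> 0 \<longrightarrow>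
           (\<exists>U V. U * homog f (2 * \<sigma>) \<tau> a b + V * homog g (3 * \<sigma>) \<tau> a b = R * b ^ M)"
    using bezout_hom[OF hcop df dg] by blast
  have ident: "b \<noteq> 0 \<longrightarrow> (\<exists>U V. U * Af a b + V * Bf a b = R * b ^ M)" for a b
    using identh unfolding Aeq Beq by blast
  obtain h K where hK: "\<tau> * degree h = K" and hsel: "(K = 2 * \<sigma> \<and> h = f) \<or> (K = 3 * \<sigma> \<and> h = g)"
    using eq by blast
  have hd0: "degree h > 0" using hK hsel sp by (metis mult_0_right mult_is_0 neq0_conv zero_neq_numeral)
  have hH: "homog h K \<tau> a b = Af a b \<or> homog h K \<tau> a b = Bf a b" for a b
    using hsel Aeq Beq by auto
  define c where "c = lead_coeff h"
  have c0: "c \<noteq> 0" using hd0 c_def by auto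
  define C0 where "C0 = nat \<bar>R\<bar> + M * (K + nat \<bar>c\<bar>) + K + nat \<bar>c\<bar>"
  define D where "D = R * c"
  have D0: "D \<noteq> 0" using R c0 D_def by simp
  define C where "C = C0 + 3"
  have key: "4 * k \<le> C0 + 3 \<and> p dvd D"
    if T: "(a, b) \<in> T_set \<upsilon> \<tau>" and p: "prime p" and k: "k \<ge> 1"
      and hA: "p ^ (4 * k) dvd Af a b" and hB: "p ^ (6 * k) dvd Bf a b" for a b p k
  proof -
    have Tp: "\<not> p ^ (\<upsilon> * \<tau>) dvd gcd a (b ^ \<tau>)" using T p unfolding T_set_def by auto
    have hB4: "p ^ (4 * k) dvd Bf a b" using hB le_imp_power_dvd[of "4*k" "6*k" p] dvd_trans by auto
    show ?thesis
    proof (cases "p ^ \<tau> dvd a \<and> p dvd b")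
      case False
      note cr = core[OF p hK hd0 R ident[where a=a and b=b] hH[where a=a and b=b] False]
      have 1: "4 * k \<le> C0" using cr(1)[OF hA hB4] unfolding C0_def c_def .
      have 2: "p dvd D"
      proof (rule ccontr)
        assume nD: "\<not> p dvd D"
        hence nR: "\<not> p dvd R" and nc: "\<not> p dvd c" unfolding D_def by auto
        have pA: "p dvd Af a b" using hA k dvd_trans[of p "p ^ (4*k)"] by (simp add: dvd_power)
        have pB: "p dvd Bf a b" using hB k dvd_trans[of p "p ^ (6*k)"] by (simp add: dvd_power)
        have r: "\<tau> \<noteq> 1 \<and> \<not> p ^ K dvd homog h K \<tau> a b"
          using cr(2)[OF nR nc[unfolded c_def] pA pB] .
        have "\<sigma> \<le> 2" using sig r hmt by auto
        hence "p ^ K dvd homog h K \<tau> a b"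
          using hsel hA hB Aeq Beq le_imp_power_dvd[of K "4*k" p] le_imp_power_dvd[of K "6*k" p] k
            dvd_trans by auto
        thus False using r by blast
      qed
      show ?thesis using 1 2 by simp
    next
      case True
      then obtain a' b' where a': "a = p ^ \<tau> * a'" and b': "b = p * b'" by (auto elim!: dvdE)
      have u2: "\<upsilon> = 2"
      proof (rule ccontr)
        assume "\<upsilon> \<noteq> 2"
        hence "\<upsilon> = 1" using hups by simp
        moreover have "p ^ \<tau> dvd b ^ \<tau>" using True by (simp add: dvd_power_same)
        ultimately have "p ^ (\<upsilon> * \<tau>) dvd gcd a (b ^ \<tau>)" using True by simp
        thus False using Tp by blast
      qed
      hence s1: "\<sigma> = 1" using sig by simp
      have prim: "\<not> (p ^ \<tau> dvd a' \<and> p dvd b')"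
      proof
        assume H: "p ^ \<tau> dvd a' \<and> p dvd b'"
        have "p ^ (2 * \<tau>) dvd a" using H a' by (simp add: mult_2 power_add)
        moreover have "(p * p) ^ \<tau> dvd b ^ \<tau>" using H b' by (intro dvd_power_same) simp
        hence "p ^ (2 * \<tau>) dvd b ^ \<tau>" by (simp add: power_mult_distrib mult_2 power_add)
        ultimately have "p ^ (\<upsilon> * \<tau>) dvd gcd a (b ^ \<tau>)" using u2 by simp
        thus False using Tp by blast
      qed
      have sA: "Af a b = p ^ 2 * Af a' b'"
        unfolding Aeq a' b' using homog_scale[OF df, of p a' b'] s1 by simp
      have sB: "Bf a b = p ^ 3 * Bf a' b'"
        unfolding Beq a' b' using homog_scale[OF dg, of p a' b'] s1 by simp
      have p0: "p \<noteq> 0" using p by auto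
      have "(2::nat) + (4 * k - 2) = 4 * k" using k by simp
      hence "p ^ 2 * p ^ (4 * k - 2) = p ^ (4 * k)" by (metis power_add)
      hence "p ^ 2 * p ^ (4 * k - 2) dvd p ^ 2 * Af a' b'"
        using hA sA by simp
      hence A2: "p ^ (4 * k - 2) dvd Af a' b'" using p0 by simp
      have "(3::nat) + (6 * k - 3) = 6 * k" using k by simp
      hence "p ^ 3 * p ^ (6 * k - 3) = p ^ (6 * k)" by (metis power_add)
      hence "p ^ 3 * p ^ (6 * k - 3) dvd p ^ 3 * Bf a' b'"
        using hB sB by simp
      hence B3: "p ^ (6 * k - 3) dvd Bf a' b'" using p0 by simp
      have A3: "p ^ (4 * k - 3) dvd Af a' b'"
        using A2 le_imp_power_dvd[of "4*k-3" "4*k-2" p] dvd_trans by auto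
      have B3': "p ^ (4 * k - 3) dvd Bf a' b'"
        using B3 le_imp_power_dvd[of "4*k-3" "6*k-3" p] dvd_trans by auto
      note cr = core[OF p hK hd0 R ident[where a=a' and b=b'] hH[where a=a' and b=b'] prim]
      have 1: "4 * k - 3 \<le> C0" using cr(1)[OF A3 B3'] unfolding C0_def c_def .
      have 2: "p dvd D"
      proof (rule ccontr)
        assume nD: "\<not> p dvd D"
        hence nR: "\<not> p dvd R" and nc: "\<not> p dvd c" unfolding D_def by auto
        have pA: "p dvd Af a' b'" using A2 k dvd_trans[of p "p ^ (4*k-2)"] by (simp add: dvd_power)
        have pB: "p dvd Bf a' b'" using B3 k dvd_trans[of p "p ^ (6*k-3)"] by (simp add: dvd_power)
        have r: "\<tau> \<noteq> 1 \<and> \<not> p ^ K dvd homog h K \<tau> a' b'"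
          using cr(2)[OF nR nc[unfolded c_def] pA pB] .
        have "p ^ K dvd homog h K \<tau> a' b'"
          using hsel A2 B3 Aeq Beq s1 le_imp_power_dvd[of K "4*k-2" p] le_imp_power_dvd[of K "6*k-3" p] k
            dvd_trans by auto
        thus False using r by blast
      qed
      show ?thesis using 1 2 by simp
    qed
  qed
  define \<Lambda> where "\<Lambda> = (D * D) ^ C"
  show ?thesis
  proof (rule exI[of _ \<Lambda>], intro conjI allI impI)
    have "0 < D * D" using D0 by (cases "D > 0") (auto simp: mult_pos_pos mult_neg_neg)
    thus "\<Lambda> > 0" unfolding \<Lambda>_def by simp
    fix n :: int
    assume n0: "n > 0"
    assume "\<exists>(a, b) \<in> T_set \<upsilon> \<tau>.
                 n ^ 12 dvd gcd ((A_form \<upsilon> m \<tau> f a b) ^ 3) ((B_form \<upsilon> m \<tau> g a b) ^ 2)"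
    then obtain a b where T: "(a, b) \<in> T_set \<upsilon> \<tau>"
      and ndv: "n ^ 12 dvd gcd ((Af a b) ^ 3) ((Bf a b) ^ 2)"
      unfolding Af_def Bf_def by blast
    show "n dvd \<Lambda>"
    proof (rule multiplicity_le_imp_dvd)
      show "n \<noteq> 0" using n0 by simp
      fix p :: int assume p: "prime p"
      define k where "k = multiplicity p n"
      show "multiplicity p n \<le> multiplicity p \<Lambda>"
      proof (cases "k = 0")
        case True thus ?thesis using k_def by simp
      next
        case False
        have "p ^ k dvd n" unfolding k_def by (rule multiplicity_dvd)
        hence "(p ^ k) ^ 12 dvd n ^ 12" by (rule dvd_power_same)
        hence "p ^ (k * 12) dvd n ^ 12" by (simp only: power_mult)
        hence pk: "p ^ (k * 12) dvd gcd ((Af a b) ^ 3) ((Bf a b) ^ 2)"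
          using ndv by (rule dvd_trans)
        have e1: "(4 * k) * 3 = k * 12" by simp
        have "p ^ ((4 * k) * 3) dvd (Af a b) ^ 3" unfolding e1 using pk gcd_dvd1 by (rule dvd_trans)
        hence hA: "p ^ (4 * k) dvd Af a b" by (rule root_pow[OF p, rotated]) simp
        have e2: "(6 * k) * 2 = k * 12" by simp
        have "p ^ ((6 * k) * 2) dvd (Bf a b) ^ 2" unfolding e2 using pk gcd_dvd2 by (rule dvd_trans)
        hence hB: "p ^ (6 * k) dvd Bf a b" by (rule root_pow[OF p, rotated]) simp
        have kk: "4 * k \<le> C0 + 3 \<and> p dvd D" using key[OF T p _ hA hB] False by simp
        have "p dvd D * D" using kk by simp
        hence m1: "multiplicity p (D * D) \<ge> 1"
          using D0 p by (intro multiplicity_geI) (auto simp: not_prime_unit)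
        have pe: "prime_elem p" using p unfolding prime_def by blast
        have "multiplicity p \<Lambda> = C * multiplicity p (D * D)"
          unfolding \<Lambda>_def using pe D0 by (simp add: prime_elem_multiplicity_power_distrib)
        also have "\<dots> \<ge> C" using m1 by simp
        finally show ?thesis using kk k_def C_def by simp
      qed
    qed
  qed
qed

end
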